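(* An iterated graph system satisfies conditions (GR1) and (GR2) if and only if its replacement graphs have uniformly bounded degree, i.e. \[ \sup_{w\in W_\#}\deg(w)<\infty, \] where $\deg(w)$ denotes the degree of $w$ in the replacement graph $G_{|w|}$.
   Context: A graph is a pair $(V,E)$ with $V$ finite non-empty and $E\subseteq V\times V$ such that $(x,y)\in E$ implies $(y,x)\notin E$; write $\{x,y\}\in E$ if $(x,y)\in E$ or $(y,x)\in E$. The degree of $x$ is the number of $y$ with $\{x,y\}\in E$. An iterated graph system (IGS) consists of a connected graph $G_1=(S,E)$, a finite set $\mathcal T$ of types, a surjective typing function $\mathfrak t:E\to\mathcal T$, and for each $t\in\mathcal T$ a non-empty set $I_t\subseteq S\times S$ (gluing rules). Let $W_m=S^m$ (words $w=w_1\cdots w_m$), $W_\#=\bigcup_{m\ge1}W_m$, $|w|$ the length of $w$, and $[w]_k=w_1\cdots w_k$. The replacement graphs $G_m=(W_m,E_m)$ with typings $\mathfrak t_m:E_m\to\mathcal T$ are defined recursively: $G_1$ and $\mathfrak t_1=\mathfrak t$ are given; for $w,v\in W_{m+1}$, $(w,v)\in E_{m+1}$ iff either (1) $[w]_m=[v]_m$ and $(w_{m+1},v_{m+1})\in E$, in which case $\mathfrak t_{m+1}(w,v)=\mathfrak t(w_{m+1},v_{m+1})$; or (2) $([w]_m,[v]_m)\in E_m$ and $(w_{m+1},v_{m+1})\in I_{\mathfrak t_m([w]_m,[v]_m)}$, in which case $\mathfrak t_{m+1}(w,v)=\mathfrak t_m([w]_m,[v]_m)$. For $t\in\mathcal T$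 and $w\in S$ let $\mathfrak b_t^+(w)=|\{v\in S:(w,v)\in I_t\}|$, $\mathfrak b_t^-(w)=|\{v\in S:(v,w)\in I_t\}|$, $\deg_t^+(w)=|\{v:(w,v)\in E,\ \mathfrak t(w,v)=t\}|$ and $\deg_t^-(w)=|\{v:(v,w)\in E,\ \mathfrak t(v,w)=t\}|$. Condition (GR1): $\mathfrak b_t^\star(w)\in\{0,1\}$ for all $t\in\mathcal T$, $\star\in\{+,-\}$, $w\in S$. Condition (GR2): for all $t\in\mathcal T$, $\star\in\{+,-\}$, $w\in S$, the numbers $\mathfrak b_t^\star(w)$ and $\deg_t^\star(w)$ are never simultaneously non-zero. *)

theory Defs
  imports Main
begin

definition IGS :: "'a set \<Rightarrow> ('a \<times> 'a) set \<Rightarrow> 'b set \<Rightarrow> ('a \<times> 'a \<Rightarrow> 'b) \<Rightarrow> ('b \<Rightarrow> ('a \<times> 'a) set) \<Rightarrow> bool" where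
  "IGS S E T tp I \<longleftrightarrow>
     finite S \<and> S \<noteq> {} \<and> E \<subseteq> S \<times> S \<and>
     (\<forall>x y. (x, y) \<in> E \<longrightarrow> (y, x) \<notin> E) \<and>
     (\<forall>x\<in>S. \<forall>y\<in>S. (x, y) \<in> (E \<union> E\<inverse>)\<^sup>*) \<and>
     finite T \<and> tp ` E = T \<and>
     (\<forall>t\<in>T. I t \<subseteq> S \<times> S \<and> I t \<noteq> {})"

definition words :: "'a set \<Rightarrow> nat \<Rightarrow> 'a list set" where
  "words S m = {w. length w = m \<and> set w \<subseteq> S}"

text \<open>Typing of edges of G_m; only meaningful on edges of G_m.
 Cases (1) and (2) are exclusive since E is irreflexive.\<close>
fun rep_typ :: "('a \<times> 'a \<Rightarrow> 'b) \<Rightarrow> nat \<Rightarrow> 'a list \<Rightarrow> 'a list \<Rightarrow> 'b" where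
  "rep_typ tp 0 w v = tp (hd w, hd v)"
| "rep_typ tp (Suc 0) w v = tp (hd w, hd v)"
| "rep_typ tp (Suc (Suc m)) w v =
     (if butlast w = butlast v then tp (last w, last v)
      else rep_typ tp (Suc m) (butlast w) (butlast v))"

fun rep_edges :: "'a set \<Rightarrow> ('a \<times> 'a) set \<Rightarrow> ('a \<times> 'a \<Rightarrow> 'b) \<Rightarrow> ('b \<Rightarrow> ('a \<times> 'a) set)
                   \<Rightarrow> nat \<Rightarrow> ('a list \<times> 'a list) set" where
  "rep_edges S E tp I 0 = {}"
| "rep_edges S E tp I (Suc 0) = {([x], [y]) | x y. (x, y) \<in> E}"
| "rep_edges S E tp I (Suc (Suc m)) =
     {(w, v). w \<in> words S (Suc (Suc m)) \<and> v \<in> words S (Suc (Suc m)) \<and>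
        ((butlast w = butlast v \<and> (last w, last v) \<in> E) \<or>
         ((butlast w, butlast v) \<in> rep_edges S E tp I (Suc m) \<and>
          (last w, last v) \<in> I (rep_typ tp (Suc m) (butlast w) (butlast v))))}"

definition rep_deg :: "'a set \<Rightarrow> ('a \<times> 'a) set \<Rightarrow> ('a \<times> 'a \<Rightarrow> 'b) \<Rightarrow> ('b \<Rightarrow> ('a \<times> 'a) set)
                   \<Rightarrow> 'a list \<Rightarrow> nat" where
  "rep_deg S E tp I w = card {v. (w, v) \<in> rep_edges S E tp I (length w) \<or>
                                (v, w) \<in> rep_edges S E tp I (length w)}"

definition b_plus :: "'a set \<Rightarrow> ('b \<Rightarrow> ('a \<times> 'a) set) \<Rightarrow> 'b \<Rightarrow> 'a \<Rightarrow> nat" where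
  "b_plus S I t w = card {v\<in>S. (w, v) \<in> I t}"
definition b_minus :: "'a set \<Rightarrow> ('b \<Rightarrow> ('a \<times> 'a) set) \<Rightarrow> 'b \<Rightarrow> 'a \<Rightarrow> nat" where
  "b_minus S I t w = card {v\<in>S. (v, w) \<in> I t}"
definition deg_plus :: "('a \<times> 'a) set \<Rightarrow> ('a \<times> 'a \<Rightarrow> 'b) \<Rightarrow> 'b \<Rightarrow> 'a \<Rightarrow> nat" where
  "deg_plus E tp t w = card {v. (w, v) \<in> E \<and> tp (w, v) = t}"
definition deg_minus :: "('a \<times> 'a) set \<Rightarrow> ('a \<times> 'a \<Rightarrow> 'b) \<Rightarrow> 'b \<Rightarrow> 'a \<Rightarrow> nat" where
  "deg_minus E tp t w = card {v. (v, w) \<in> E \<and> tp (v, w) = t}"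

definition GR1 :: "'a set \<Rightarrow> 'b set \<Rightarrow> ('b \<Rightarrow> ('a \<times> 'a) set) \<Rightarrow> bool" where
  "GR1 S T I \<longleftrightarrow> (\<forall>t\<in>T. \<forall>w\<in>S. b_plus S I t w \<in> {0, 1} \<and> b_minus S I t w \<in> {0, 1})"

definition GR2 :: "'a set \<Rightarrow> ('a \<times> 'a) set \<Rightarrow> 'b set \<Rightarrow> ('a \<times> 'a \<Rightarrow> 'b) \<Rightarrow> ('b \<Rightarrow> ('a \<times> 'a) set) \<Rightarrow> bool" where
  "GR2 S E T tp I \<longleftrightarrow> (\<forall>t\<in>T. \<forall>w\<in>S.
      \<not> (b_plus S I t w \<noteq> 0 \<and> deg_plus E tp t w \<noteq> 0) \<and>
      \<not> (b_minus S I t w \<noteq> 0 \<and> deg_minus E tp t w \<noteq> 0))"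

end

theory Submission
  imports Defs
begin

definition outs where
  "outs S E tp I m w t = {v. (w,v) \<in> rep_edges S E tp I m \<and> rep_typ tp m w v = t}"

lemma words_Suc: "w \<in> words S (Suc m) \<longleftrightarrow> (\<exists>u a. w = u@[a] \<and> u \<in> words S m \<and> a \<in> S)"
proof
  assume "w \<in> words S (Suc m)"
  then show "\<exists>u a. w = u@[a] \<and> u \<in> words S m \<and> a \<in> S"
    by (cases w rule: rev_exhaust) (auto simp: words_def)
qed (auto simp: words_def)

lemma finite_words: "finite S \<Longrightarrow> finite (words S m)"
  unfolding words_def using finite_lists_length_eq[of S m] by (simp add: conj_commute)

lemma edges_words:
  assumes "(w,v) \<in> rep_edges S E tp I m" "E \<subseteq> S \<times> S"
  shows "w \<in> words S m \<and> v \<in> words S m"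
proof (cases m)
  case 0 then show ?thesis using assms by simp
next
  case (Suc k) then show ?thesis using assms by (cases k) (auto simp: words_def)
qed

lemma irrefl_edges:
  assumes "\<forall>x y. (x,y)\<in>E \<longrightarrow> (y,x)\<notin>E"
  shows "(w,w) \<notin> rep_edges S E tp I m"
  using assms by (induction S E tp I m arbitrary: w rule: rep_edges.induct) auto

lemma typ_T:
  assumes "(w,v) \<in> rep_edges S E tp I m" "tp`E \<subseteq> T" "\<forall>x y. (x,y)\<in>E \<longrightarrow> (y,x)\<notin>E"
  shows "rep_typ tp m w v \<in> T"
  using assms
proof (induction S E tp I m arbitrary: w v rule: rep_edges.induct)
  case (3 S E tp I m)
  show ?case
  proof (cases "butlast w = butlast v")
    case True
    then have "(last w, last v) \<in> E" using 3(2) irrefl_edges[OF 3(4), of "butlast v" S tp I "Suc m"] by auto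
    then show ?thesis using True 3(3) by auto
  next
    case False
    then show ?thesis using 3 by auto
  qed
qed auto

lemma outs_step:
  assumes "u \<in> words S (Suc m)" "a \<in> S" "E \<subseteq> S \<times> S" "\<forall>x y. (x,y)\<in>E \<longrightarrow> (y,x)\<notin>E"
  shows "outs S E tp I (Suc (Suc m)) (u@[a]) t =
     {u@[b] | b. (a,b)\<in>E \<and> tp(a,b)=t} \<union> {u'@[b] | u' b. u' \<in> outs S E tp I (Suc m) u t \<and> (a,b) \<in> I t \<and> b\<in>S}"
  (is "?L = ?A \<union> ?B")
proof
  show "?L \<subseteq> ?A \<union> ?B"
  proof
    fix v assume v: "v \<in> ?L"
    then have e: "(u@[a], v) \<in> rep_edges S E tp I (Suc (Suc m))" and ty: "rep_typ tp (Suc (Suc m)) (u@[a]) v = t"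
      by (auto simp: outs_def)
    then have "v \<in> words S (Suc (Suc m))" by simp
    then obtain u' b where vv: "v = u'@[b]" "u' \<in> words S (Suc m)" "b \<in> S" by (auto simp: words_Suc)
    show "v \<in> ?A \<union> ?B"
    proof (cases "u' = u")
      case True
      then have "(a,b) \<in> E" using e vv irrefl_edges[OF assms(4), of u S tp I "Suc m"] by auto
      then show ?thesis using True vv ty by auto
    next
      case False
      then show ?thesis using e vv ty by (auto simp: outs_def)
    qed
  qed
next
  show "?A \<union> ?B \<subseteq> ?L"
  proof
    fix v assume "v \<in> ?A \<union> ?B"
    then show "v \<in> ?L"
    proof
      assume "v \<in> ?A"
      then obtain b where "v = u@[b]" "(a,b)\<in>E" "tp(a,b)=t" by auto
      then show ?thesis using assms by (auto simp: outs_def words_def)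
    next
      assume "v \<in> ?B"
      then obtain u' b where vv: "v = u'@[b]" "u' \<in> outs S E tp I (Suc m) u t" "(a,b) \<in> I t" "b\<in>S" by auto
      then have e: "(u,u') \<in> rep_edges S E tp I (Suc m)" and ty: "rep_typ tp (Suc m) u u' = t"
        by (auto simp: outs_def)
      have "u' \<noteq> u" using e irrefl_edges[OF assms(4)] by blast
      moreover have "u' \<in> words S (Suc m)" using edges_words[OF e assms(3)] by simp
      ultimately show ?thesis using vv e ty assms by (auto simp: outs_def words_def)
    qed
  qed
qed


definition pre where
  "pre S E T tp \<longleftrightarrow> finite S \<and> E \<subseteq> S \<times> S \<and> (\<forall>x y. (x,y)\<in>E \<longrightarrow> (y,x)\<notin>E) \<and> tp`E = T"

lemma outs_finite: "pre S E T tp \<Longrightarrow> finite (outs S E tp I m w t)"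
  by (rule finite_subset[OF _ finite_words[of S m]])
     (auto simp: outs_def pre_def dest: edges_words)

lemma outs_upper:
  assumes p: "pre S E T tp"
    and g1: "\<forall>t\<in>T. \<forall>w\<in>S. b_plus S I t w \<le> 1"
    and g2: "\<forall>t\<in>T. \<forall>w\<in>S. \<not> (b_plus S I t w \<noteq> 0 \<and> deg_plus E tp t w \<noteq> 0)"
  shows "w \<in> words S (Suc m) \<Longrightarrow> card (outs S E tp I (Suc m) w t) \<le> card S"
proof (induction m arbitrary: w)
  case 0
  have "outs S E tp I (Suc 0) w t \<subseteq> (\<lambda>b. [b]) ` S" using p by (auto simp: outs_def pre_def)
  moreover have fS: "finite S" using p by (simp add: pre_def)
  ultimately show ?case using card_mono[OF finite_imageI[OF fS]] card_image_le[OF fS, of "\<lambda>b. [b]"]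
    by (meson le_trans)
next
  case (Suc m)
  from Suc.prems obtain u a where w: "w = u@[a]" "u \<in> words S (Suc m)" "a \<in> S" by (auto simp: words_Suc)
  have fS: "finite S" and ES: "E \<subseteq> S \<times> S" and as: "\<forall>x y. (x,y)\<in>E \<longrightarrow> (y,x)\<notin>E" and TE: "tp`E = T"
    using p by (auto simp: pre_def)
  let ?A = "{u@[b] | b. (a,b)\<in>E \<and> tp(a,b)=t}"
  let ?B = "{u'@[b] | u' b. u' \<in> outs S E tp I (Suc m) u t \<and> (a,b) \<in> I t \<and> b\<in>S}"
  have eq: "outs S E tp I (Suc (Suc m)) w t = ?A \<union> ?B" using outs_step[OF w(2,3) ES as] w(1) by simp
  have Afin: "?A \<subseteq> (\<lambda>b. u@[b]) ` S" using ES w by auto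
  then have cA: "card ?A \<le> card S" using card_image_le[OF fS, of "\<lambda>b. u@[b]"] card_mono[OF finite_imageI[OF fS]]
    by (meson le_trans)
  show ?case
  proof (cases "?B = {}")
    case True
    have "outs S E tp I (Suc (Suc m)) w t = ?A" unfolding eq True Un_empty_right ..
    then show ?thesis using cA by (simp only:)
  next
    case False
    then obtain u0 b0 where u0: "u0 \<in> outs S E tp I (Suc m) u t" "(a,b0) \<in> I t" "b0 \<in> S" by auto
    have tT: "t \<in> T" using u0(1) typ_T[of u u0 S E tp I "Suc m" T] TE as by (auto simp: outs_def)
    have bS: "{v\<in>S. (a, v) \<in> I t} \<noteq> {}" using u0 by auto
    have fin: "finite {v\<in>S. (a, v) \<in> I t}" using fS by simp
    have b1: "b_plus S I t a = 1" proof -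
      have "b_plus S I t a \<le> 1" using g1 tT w(3) by blast
      moreover have "b_plus S I t a \<noteq> 0" using bS fin unfolding b_plus_def by simp
      ultimately show ?thesis by simp
    qed
    then obtain b1 where b1s: "{v\<in>S. (a, v) \<in> I t} = {b1}" by (auto simp: b_plus_def card_Suc_eq)
    have "\<not> (b_plus S I t a \<noteq> 0 \<and> deg_plus E tp t a \<noteq> 0)" using g2 tT w(3) by blast
    then have "deg_plus E tp t a = 0" using b1 by simp
    moreover have "finite {v. (a, v) \<in> E \<and> tp (a, v) = t}"
      by (rule finite_subset[OF _ fS]) (use ES in auto)
    ultimately have A0: "?A = {}" by (auto simp: deg_plus_def)
    have B0: "?B = (\<lambda>u'. u'@[b1]) ` outs S E tp I (Suc m) u t" using b1s by auto
    have "outs S E tp I (Suc (Suc m)) w t = (\<lambda>u'. u'@[b1]) ` outs S E tp I (Suc m) u t"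
      unfolding eq A0 B0 by simp
    then have "card (outs S E tp I (Suc (Suc m)) w t) \<le> card (outs S E tp I (Suc m) u t)"
      using card_image_le[OF outs_finite[OF p]] by simp
    then show ?thesis using Suc.IH[OF w(2)] by simp
  qed
qed

lemma out_nb_upper:
  assumes p: "pre S E T tp"
    and g1: "\<forall>t\<in>T. \<forall>w\<in>S. b_plus S I t w \<le> 1"
    and g2: "\<forall>t\<in>T. \<forall>w\<in>S. \<not> (b_plus S I t w \<noteq> 0 \<and> deg_plus E tp t w \<noteq> 0)"
    and w: "w \<in> words S (Suc m)"
  shows "card {v. (w,v) \<in> rep_edges S E tp I (Suc m)} \<le> card T * card S"
proof -
  have TE: "tp`E = T" and as: "\<forall>x y. (x,y)\<in>E \<longrightarrow> (y,x)\<notin>E" and ES: "E \<subseteq> S \<times> S" and fS: "finite S"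
    using p by (auto simp: pre_def)
  have "finite E" using finite_subset[OF ES] fS by blast
  then have fT: "finite T" using TE by blast
  have "{v. (w,v) \<in> rep_edges S E tp I (Suc m)} = (\<Union>t\<in>T. outs S E tp I (Suc m) w t)"
  proof -
    have "\<And>v. (w,v) \<in> rep_edges S E tp I (Suc m) \<Longrightarrow> rep_typ tp (Suc m) w v \<in> T"
      using typ_T[of w _ S E tp I "Suc m" T] TE as by blast
    then show ?thesis unfolding outs_def by blast
  qed
  then have "card {v. (w,v) \<in> rep_edges S E tp I (Suc m)} \<le> (\<Sum>t\<in>T. card (outs S E tp I (Suc m) w t))"
    using card_UN_le[OF fT] by simp
  also have "\<dots> \<le> card T * card S"
    using sum_bounded_above[of T "\<lambda>t. card (outs S E tp I (Suc m) w t)" "card S"]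
      outs_upper[OF p g1 g2 w] by simp
  finally show ?thesis .
qed


lemma outs_lower:
  assumes p: "pre S E T tp" and tT: "t \<in> T" and aS: "a \<in> S"
    and b1: "b_plus S I t a \<ge> 1"
    and b2: "b_plus S I t a \<ge> 2 \<or> deg_plus E tp t a \<ge> 1"
  shows "\<exists>w\<in>words S (Suc k). card (outs S E tp I (Suc k) w t) \<ge> Suc k"
proof (induction k)
  have fS: "finite S" and ES: "E \<subseteq> S \<times> S" and TE: "tp`E = T"
    using p by (auto simp: pre_def)
  case 0
  obtain x y where xy: "(x,y) \<in> E" "tp (x,y) = t" using tT TE by auto
  have "[y] \<in> outs S E tp I (Suc 0) [x] t" using xy by (auto simp: outs_def)
  then have "card (outs S E tp I (Suc 0) [x] t) \<ge> 1"
    using outs_finite[OF p] by (metis One_nat_def Suc_leI card_gt_0_iff empty_iff)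
  moreover have "[x] \<in> words S (Suc 0)" using xy ES by (auto simp: words_def)
  ultimately show ?case by auto
next
  case (Suc k)
  have fS: "finite S" and ES: "E \<subseteq> S \<times> S" and TE: "tp`E = T" and as: "\<forall>x y. (x,y)\<in>E \<longrightarrow> (y,x)\<notin>E"
    using p by (auto simp: pre_def)
  from Suc.IH obtain w where w: "w \<in> words S (Suc k)" "card (outs S E tp I (Suc k) w t) \<ge> Suc k" by blast
  let ?O = "outs S E tp I (Suc k) w t"
  let ?O' = "outs S E tp I (Suc (Suc k)) (w@[a]) t"
  have eq: "?O' = {w@[b] | b. (a,b)\<in>E \<and> tp(a,b)=t} \<union> {u'@[b] | u' b. u' \<in> ?O \<and> (a,b) \<in> I t \<and> b\<in>S}"
    using outs_step[OF w(1) aS ES as] .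
  have fin: "finite {v\<in>S. (a, v) \<in> I t}" using fS by simp
  have "{v\<in>S. (a, v) \<in> I t} \<noteq> {}" using b1 by (metis b_plus_def card.empty not_one_le_zero)
  then obtain c1 where c1: "c1 \<in> S" "(a,c1) \<in> I t" by auto
  define f where "f = (\<lambda>u'. u' @ [c1])"
  have fsub: "f ` ?O \<subseteq> ?O'" using eq c1 by (auto simp: f_def)
  have inj: "inj f" by (auto simp: f_def inj_def)
  have "\<exists>z. z \<in> ?O' \<and> z \<notin> f ` ?O"
  proof (cases "b_plus S I t a \<ge> 2")
    case True
    have "\<not> {v\<in>S. (a, v) \<in> I t} \<subseteq> {c1}"
    proof
      assume "{v\<in>S. (a, v) \<in> I t} \<subseteq> {c1}"
      then have "card {v\<in>S. (a, v) \<in> I t} \<le> 1" using card_mono[of "{c1}"] by fastforce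
      then show False using True by (simp add: b_plus_def)
    qed
    then obtain c2 where c2: "c2 \<in> S" "(a,c2) \<in> I t" "c2 \<noteq> c1" by auto
    have "?O \<noteq> {}" using w(2) by auto
    then obtain u0 where "u0 \<in> ?O" by auto
    then show ?thesis using c2 eq by (intro exI[of _ "u0@[c2]"]) (auto simp: f_def)
  next
    case False
    then have "deg_plus E tp t a \<ge> 1" using b2 by auto
    then have "{v. (a, v) \<in> E \<and> tp (a, v) = t} \<noteq> {}" by (metis deg_plus_def card.empty not_one_le_zero)
    then obtain c where c: "(a,c) \<in> E" "tp (a,c) = t" by auto
    have "w \<notin> ?O" using irrefl_edges[OF as] unfolding outs_def by blast
    then show ?thesis using c eq by (intro exI[of _ "w@[c]"]) (auto simp: f_def)
  qed
  then obtain z where z: "z \<in> ?O'" "z \<notin> f ` ?O" by blast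
  have "insert z (f ` ?O) \<subseteq> ?O'" using z fsub by auto
  then have "card (insert z (f ` ?O)) \<le> card ?O'" by (rule card_mono[OF outs_finite[OF p]])
  moreover have "card (insert z (f ` ?O)) = Suc (card ?O)"
    using z(2) outs_finite[OF p] card_image[OF inj_on_subset[OF inj]] by simp
  ultimately have "card ?O' \<ge> Suc (Suc k)" using w(2) by simp
  moreover have "w@[a] \<in> words S (Suc (Suc k))" using w(1) aS by (auto simp: words_Suc)
  ultimately show ?case by blast
qed


lemma rev_typ: "rep_typ (\<lambda>p. tp (snd p, fst p)) m v w = rep_typ tp m w v"
  by (induction tp m w v rule: rep_typ.induct) auto

lemma rev_edges: "rep_edges S (E\<inverse>) (\<lambda>p. tp (snd p, fst p)) (\<lambda>t. (I t)\<inverse>) m = (rep_edges S E tp I m)\<inverse>"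
proof (induction S E tp I m rule: rep_edges.induct)
  case (3 S E tp I m)
  show ?case
    apply (simp only: rep_edges.simps 3 rev_typ)
    apply auto
    done
qed auto

lemma pre_rev: "pre S E T tp \<Longrightarrow> pre S (E\<inverse>) T (\<lambda>p. tp (snd p, fst p))"
  unfolding pre_def by (auto simp: image_iff) (force+)

lemma b_rev: "b_plus S (\<lambda>t. (I t)\<inverse>) t w = b_minus S I t w"
  by (simp add: b_plus_def b_minus_def)

lemma deg_rev: "deg_plus (E\<inverse>) (\<lambda>p. tp (snd p, fst p)) t w = deg_minus E tp t w"
  by (simp add: deg_plus_def deg_minus_def)

theorem lemma3p5:
  fixes S :: "'a set" and E :: "('a \<times> 'a) set" and T :: "'b set"
    and tp :: "'a \<times> 'a \<Rightarrow> 'b" and I :: "'b \<Rightarrow> ('a \<times> 'a) set"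
  assumes "IGS S E T tp I"
  shows "(GR1 S T I \<and> GR2 S E T tp I) \<longleftrightarrow>
         (\<exists>B::nat. \<forall>m\<ge>1. \<forall>w\<in>words S m. rep_deg S E tp I w \<le> B)"
proof -
  define Er where "Er = E\<inverse>"
  define tpr where "tpr = (\<lambda>p. tp (snd p, fst p))"
  define Ir where "Ir = (\<lambda>t. (I t)\<inverse>)"
  have p: "pre S E T tp" using assms by (auto simp: IGS_def pre_def)
  have pr: "pre S Er T tpr" using pre_rev[OF p] by (simp add: Er_def tpr_def)
  have fS: "finite S" using p by (simp add: pre_def)
  have revE: "\<And>m. rep_edges S Er tpr Ir m = (rep_edges S E tp I m)\<inverse>"
    unfolding Er_def tpr_def Ir_def by (rule rev_edges)
  have bm: "\<And>t w. b_minus S I t w = b_plus S Ir t w" by (simp add: Ir_def b_rev)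
  have dm: "\<And>t w. deg_minus E tp t w = deg_plus Er tpr t w" by (simp add: Er_def tpr_def deg_rev)
  have GR1eq: "GR1 S T I \<longleftrightarrow> (\<forall>t\<in>T. \<forall>w\<in>S. b_plus S I t w \<le> 1) \<and> (\<forall>t\<in>T. \<forall>w\<in>S. b_plus S Ir t w \<le> 1)"
    unfolding GR1_def bm by (auto simp: le_Suc_eq)
  have GR2eq: "GR2 S E T tp I \<longleftrightarrow> (\<forall>t\<in>T. \<forall>w\<in>S. \<not> (b_plus S I t w \<noteq> 0 \<and> deg_plus E tp t w \<noteq> 0))
     \<and> (\<forall>t\<in>T. \<forall>w\<in>S. \<not> (b_plus S Ir t w \<noteq> 0 \<and> deg_plus Er tpr t w \<noteq> 0))"
    unfolding GR2_def bm dm by blast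
  have degsplit: "rep_deg S E tp I w = card ({v. (w,v) \<in> rep_edges S E tp I m} \<union> {v. (w,v) \<in> rep_edges S Er tpr Ir m})"
    if "w \<in> words S m" for w m
    using that unfolding rep_deg_def revE words_def by (auto intro: arg_cong[where f=card])
  have nbfin: "finite {v. (w,v) \<in> rep_edges S E' tp' I' m}" if "E' \<subseteq> S \<times> S" for w m E' tp' I'
    by (rule finite_subset[OF _ finite_words[OF fS, of m]]) (use edges_words[OF _ that] in blast)
  have ES: "E \<subseteq> S \<times> S" and ErS: "Er \<subseteq> S \<times> S" using p pr by (auto simp: pre_def)
  show ?thesis
  proof
    assume g: "GR1 S T I \<and> GR2 S E T tp I"
    show "\<exists>B::nat. \<forall>m\<ge>1. \<forall>w\<in>words S m. rep_deg S E tp I w \<le> B"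
    proof (intro exI allI impI ballI)
      fix m w assume m: "1 \<le> m" and w: "w \<in> words S m"
      obtain k where k: "m = Suc k" using m by (cases m) auto
      have "rep_deg S E tp I w \<le> card {v. (w,v) \<in> rep_edges S E tp I m} + card {v. (w,v) \<in> rep_edges S Er tpr Ir m}"
        using degsplit[OF w] card_Un_le by simp
      also have "\<dots> \<le> card T * card S + card T * card S"
        using out_nb_upper[OF p _ _ w[unfolded k]] out_nb_upper[OF pr _ _ w[unfolded k]] g
        unfolding GR1eq GR2eq k by (meson add_le_mono)
      finally show "rep_deg S E tp I w \<le> 2 * card T * card S" by simp
    qed
  next
    assume "\<exists>B::nat. \<forall>m\<ge>1. \<forall>w\<in>words S m. rep_deg S E tp I w \<le> B"
    then obtain B where B: "\<And>m w. m \<ge> 1 \<Longrightarrow> w \<in> words S m \<Longrightarrow> rep_deg S E tp I w \<le> B" by blast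
    have main: False if pp: "pre S E' T tp'" and E'S: "E' \<subseteq> S \<times> S"
      and E'c: "E' = E \<or> E' = Er" and R: "\<And>m. rep_edges S E' tp' I' m = rep_edges S E tp I m \<or> rep_edges S E' tp' I' m = rep_edges S Er tpr Ir m"
      and tT: "t \<in> T" and aS: "a \<in> S" and b1: "b_plus S I' t a \<ge> 1"
      and b2: "b_plus S I' t a \<ge> 2 \<or> deg_plus E' tp' t a \<ge> 1" for E' tp' I' t a
    proof -
      obtain w where w: "w \<in> words S (Suc B)" "card (outs S E' tp' I' (Suc B) w t) \<ge> Suc B"
        using outs_lower[OF pp tT aS b1 b2] by blast
      have "outs S E' tp' I' (Suc B) w t \<subseteq> {v. (w,v) \<in> rep_edges S E' tp' I' (Suc B)}"
        by (auto simp: outs_def)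
      note sub = this
      have "card {v. (w,v) \<in> rep_edges S E' tp' I' (Suc B)} \<ge> Suc B"
        using card_mono[OF nbfin[OF E'S] sub] w(2) by linarith
      moreover have "card {v. (w,v) \<in> rep_edges S E' tp' I' (Suc B)} \<le> rep_deg S E tp I w"
        using R[of "Suc B"] degsplit[OF w(1)] card_mono[OF finite_UnI[OF nbfin[OF ES] nbfin[OF ErS]]]
        by (metis Un_upper1 Un_upper2)
      moreover have "rep_deg S E tp I w \<le> B" using B[OF _ w(1)] by simp
      ultimately show False by simp
    qed
    show "GR1 S T I \<and> GR2 S E T tp I"
    proof (rule ccontr)
      assume "\<not> (GR1 S T I \<and> GR2 S E T tp I)"
      then obtain t a where ta: "t \<in> T" "a \<in> S" and
        c: "(b_plus S I t a \<ge> 1 \<and> (b_plus S I t a \<ge> 2 \<or> deg_plus E tp t a \<ge> 1)) \<or>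
            (b_plus S Ir t a \<ge> 1 \<and> (b_plus S Ir t a \<ge> 2 \<or> deg_plus Er tpr t a \<ge> 1))"
        unfolding GR1eq GR2eq by (auto simp: not_le)
      then show False
        using main[OF p ES _ _ ta] main[OF pr ErS _ _ ta] by blast
    qed
  qed
qed

end
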